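(* There is an absolute constant $C>0$ such that the following holds. Let $\lambda\vdash n$ and $\mu\vdash\Delta$ (with $\Delta\in\mathbb{N}$) be partitions with $\mu=\lambda\backslash\lambda_1$, and let $q\in\mathbb{N}$. Then \[ \left|m_{\chi_\lambda}^{(q)}-\frac{\chi_\mu(1)}{n!}\sum_{\pi\in S_n}\binom{c_1(\pi^q)}{\Delta}\right|\leq C\,\frac{\chi_\mu(1)}{n!}\sum_{j=1}^{\Delta}\sum_{\pi\in S_n}\binom{c_1(\pi^q)+\cdots+c_{j+1}(\pi^q)}{\Delta-j}. \]
   Context: For a positive integer $q$, $r_q\colon S_n\to\mathbb{N}_0$, $r_q(\pi)=\#\{\sigma\in S_n:\sigma^q=\pi\}$, and for an irreducible character $\chi$ of $S_n$, $m_\chi^{(q)}:=\langle r_q,\chi\rangle$ (equivalently $m_\chi^{(q)}=\frac{1}{n!}\sum_{\pi\in S_n}\chi(\pi^q)$). For a partition $\lambda=(\lambda_1,\ldots,\lambda_l)\vdash n$, $\lambda\backslash\lambda_1:=(\lambda_2,\ldots,\lambda_l)$. $\chi_\lambda$ is the irreducible character of $S_n$ indexed by $\lambda$, and $\chi_\mu(1)$ is the degree of the irreducible character of $S_\Delta$ indexed by $\mu$. For $\pi\in S_n$, $c_i(\pi)$ is the number of $i$-cycles of $\pi$. *)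

theory Defs
  imports Complex_Main "HOL-Combinatorics.Permutations" "HOL-Library.FuncSet"
begin

definition sym_grp :: "nat \<Rightarrow> (nat \<Rightarrow> nat) set" where
  "sym_grp n = {p. p permutes {0..<n}}"

definition cyc_len :: "(nat \<Rightarrow> nat) \<Rightarrow> nat \<Rightarrow> nat" where
  "cyc_len p x = (LEAST k. 0 < k \<and> (p ^^ k) x = x)"

definition cycle_count :: "nat \<Rightarrow> (nat \<Rightarrow> nat) \<Rightarrow> nat \<Rightarrow> nat" where
  "cycle_count n p i = card {x \<in> {0..<n}. cyc_len p x = i} div i"

definition is_partition :: "nat list \<Rightarrow> nat \<Rightarrow> bool" where
  "is_partition lam n \<longleftrightarrow> sorted_wrt (\<ge>) lam \<and> (\<forall>x\<in>set lam. 0 < x) \<and> sum_list lam = n"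

definition perm_orbit :: "(nat \<Rightarrow> nat) \<Rightarrow> nat \<Rightarrow> nat set" where
  "perm_orbit p x = {(p ^^ k) x | k. True}"

definition perm_cycles :: "nat \<Rightarrow> (nat \<Rightarrow> nat) \<Rightarrow> nat set set" where
  "perm_cycles n p = perm_orbit p ` {0..<n}"

text \<open>Number of ways to colour the cycles of p with colours 0..<l such that the cycles
  of colour i have total length alpha i (= <h_alpha, p_rho>, a Young permutation character).\<close>
definition colorings_count :: "nat \<Rightarrow> (nat \<Rightarrow> nat) \<Rightarrow> nat \<Rightarrow> (nat \<Rightarrow> int) \<Rightarrow> nat" where
  "colorings_count n p l alpha =
     card {f \<in> perm_cycles n p \<rightarrow>\<^sub>E {0..<l}.
             \<forall>i<l. int (\<Sum>C\<in>{C \<in> perm_cycles n p. f C = i}. card C) = alpha i}"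

text \<open>Irreducible character chi_lambda of S_n (n = |lambda|), via the Frobenius /
  Jacobi--Trudi determinant formula
  chi_lambda = sum_sigma sgn(sigma) * (character of Young subgroup S_{lambda_i - i + sigma(i)}).\<close>
definition chi :: "nat list \<Rightarrow> (nat \<Rightarrow> nat) \<Rightarrow> int" where
  "chi lam p = (\<Sum>\<sigma> \<in> {\<sigma>. \<sigma> permutes {0..<length lam}}.
      sign \<sigma> * int (colorings_count (sum_list lam) p (length lam)
                      (\<lambda>i. int (lam ! i) - int i + int (\<sigma> i))))"

definition r_q :: "nat \<Rightarrow> nat \<Rightarrow> (nat \<Rightarrow> nat) \<Rightarrow> nat" where
  "r_q n q p = card {\<sigma> \<in> sym_grp n. \<sigma> ^^ q = p}"

text \<open>m_chi^(q) = <r_q, chi_lambda> (characters of S_n are real).\<close>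
definition mult_q :: "nat list \<Rightarrow> nat \<Rightarrow> real" where
  "mult_q lam q = (let n = sum_list lam in
     (1 / fact n) * (\<Sum>\<pi> \<in> sym_grp n. real (r_q n q \<pi>) * real_of_int (chi lam \<pi>)))"

end

theory Submission
  imports Defs "Jordan_Normal_Form.Determinant" "HOL-Combinatorics.Orbits"
begin

definition Ncol :: "'c set \<Rightarrow> ('c \<Rightarrow> nat) \<Rightarrow> nat \<Rightarrow> (nat \<Rightarrow> int) \<Rightarrow> nat" where
  "Ncol CS w l alpha = card {f \<in> CS \<rightarrow>\<^sub>E {0..<l}.
      \<forall>i<l. int (\<Sum>C\<in>{C \<in> CS. f C = i}. w C) = alpha i}"

lemma Ncol_empty: "Ncol {} w l alpha = (if \<forall>i<l. alpha i = 0 then 1 else 0)"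
proof -
  have "{f \<in> {} \<rightarrow>\<^sub>E {0..<l}. \<forall>i<l. int (\<Sum>C\<in>{C \<in> {}. f C = i}. w C) = alpha i}
     = (if \<forall>i<l. alpha i = 0 then {\<lambda>_. undefined} else {})"
    by (auto simp: PiE_empty_domain)
  then show ?thesis unfolding Ncol_def by simp
qed

lemma Ncol_insert:
  assumes fin: "finite CS" and c: "c \<notin> CS"
  shows "Ncol (insert c CS) w l alpha =
    (\<Sum>i<l. Ncol CS w l (alpha(i := alpha i - int (w c))))"
proof -
  define P where "P = (\<lambda>CS f beta. \<forall>i<l. int (\<Sum>C\<in>{C \<in> CS. f C = i}. w C) = beta i)"
  let ?S = "{f \<in> insert c CS \<rightarrow>\<^sub>E {0..<l}. P (insert c CS) f alpha}"
  let ?T = "\<lambda>i. {g \<in> CS \<rightarrow>\<^sub>E {0..<l}. P CS g (alpha(i := alpha i - int (w c)))}"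
  have sumeq: "(\<Sum>C\<in>{C \<in> insert c CS. (g(c:=i)) C = j}. w C)
      = (\<Sum>C\<in>{C \<in> CS. g C = j}. w C) + (if i = j then w c else 0)" for g :: "'a \<Rightarrow> nat" and i j
  proof -
    have "{C \<in> insert c CS. (g(c:=i)) C = j} = (if i = j then insert c {C \<in> CS. g C = j} else {C \<in> CS. g C = j})"
      using c by auto
    then show ?thesis using fin c by auto
  qed
  have sumeq': "int (\<Sum>C\<in>{C \<in> insert c CS. (g(c:=i)) C = j}. w C)
      = int (\<Sum>C\<in>{C \<in> CS. g C = j}. w C) + (if i = j then int (w c) else 0)" for g :: "'a \<Rightarrow> nat" and i j
    using sumeq[of g i j] by simp
  have Peq: "P (insert c CS) (g(c:=i)) alpha \<longleftrightarrow> P CS g (alpha(i := alpha i - int (w c)))"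
    if "i < l" for g :: "'a \<Rightarrow> nat" and i
  proof -
    have "P (insert c CS) (g(c:=i)) alpha \<longleftrightarrow> (\<forall>j<l. int (\<Sum>C\<in>{C \<in> CS. g C = j}. w C) + (if i = j then int (w c) else 0) = alpha j)"
      unfolding P_def by (simp only: sumeq')
    also have "\<dots> \<longleftrightarrow> P CS g (alpha(i := alpha i - int (w c)))"
      unfolding P_def using that by (auto simp: fun_upd_apply)
    finally show ?thesis .
  qed
  have S_eq: "?S = (\<Union>i\<in>{0..<l}. (\<lambda>g. g(c := i)) ` ?T i)"
  proof (rule Set.set_eqI, rule iffI)
    fix f assume f: "f \<in> ?S"
    define i where "i = f c"
    define g where "g = f(c := undefined)"
    have i: "i \<in> {0..<l}" using f by (auto simp: i_def)
    have fg: "f = g(c := i)" by (auto simp: g_def i_def)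
    have gT: "g \<in> CS \<rightarrow>\<^sub>E {0..<l}" using f c by (auto simp: g_def PiE_def extensional_def Pi_def)
    have "P CS g (alpha(i := alpha i - int (w c)))"
      using f Peq[of i g] i unfolding fg by auto
    then show "f \<in> (\<Union>i\<in>{0..<l}. (\<lambda>g. g(c := i)) ` ?T i)" using i gT fg by blast
  next
    fix f assume "f \<in> (\<Union>i\<in>{0..<l}. (\<lambda>g. g(c := i)) ` ?T i)"
    then obtain i g where i: "i \<in> {0..<l}" and g: "g \<in> ?T i" and fg: "f = g(c := i)" by blast
    have "f \<in> insert c CS \<rightarrow>\<^sub>E {0..<l}" using g i c unfolding fg by (auto simp: PiE_def extensional_def Pi_def)
    moreover have "P (insert c CS) f alpha"
      using g i Peq[of i g] unfolding fg by auto
    ultimately show "f \<in> ?S" by blast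
  qed
  have finT: "finite (?T i)" for i using fin by (intro finite_subset[OF _ finite_PiE[of CS "\<lambda>_. {0..<l}"]]) auto
  have inj: "inj_on (\<lambda>g. g(c := i)) (?T i)" for i
  proof (rule inj_onI)
    fix g h assume g: "g \<in> ?T i" and h: "h \<in> ?T i" and e: "g(c := i) = h(c := i)"
    have "g c = h c" using g h c by (auto simp: PiE_def extensional_def)
    show "g = h"
    proof (rule ext)
      fix x show "g x = h x" using fun_cong[OF e, of x] \<open>g c = h c\<close> by (cases "x = c") auto
    qed
  qed
  have disj: "\<forall>i\<in>{0..<l}. \<forall>j\<in>{0..<l}. i \<noteq> j \<longrightarrow>
      (\<lambda>g. g(c := i)) ` ?T i \<inter> (\<lambda>g. g(c := j)) ` ?T j = {}"
  proof (intro ballI impI)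
    fix i j :: nat assume "i \<noteq> j"
    show "(\<lambda>g. g(c := i)) ` ?T i \<inter> (\<lambda>g. g(c := j)) ` ?T j = {}"
    proof (rule ccontr)
      assume "\<not> ?thesis"
      then obtain g h where "g(c := i) = h(c := j)" by blast
      then have "(g(c := i)) c = (h(c := j)) c" by simp
      then have "i = j" by simp
      then show False using \<open>i \<noteq> j\<close> by simp
    qed
  qed
  have "card ?S = (\<Sum>i\<in>{0..<l}. card ((\<lambda>g. g(c := i)) ` ?T i))"
    unfolding S_eq by (rule card_UN_disjoint[OF _ _ disj]) (auto intro: finite_imageI finT)
  also have "\<dots> = (\<Sum>i\<in>{0..<l}. card (?T i))"
    by (rule sum.cong) (auto simp: card_image[OF inj])
  finally have "card ?S = (\<Sum>i\<in>{0..<l}. card (?T i))" .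
  then show ?thesis unfolding Ncol_def P_def atLeast0LessThan .
qed

lemma Ncol_perm:
  assumes tau: "tau permutes {0..<l}" and fin: "finite CS"
  shows "Ncol CS w l (alpha \<circ> tau) = Ncol CS w l alpha"
  using fin
proof (induction CS arbitrary: alpha rule: finite_induct)
  case empty
  have "(\<forall>i<l. alpha (tau i) = 0) \<longleftrightarrow> (\<forall>i<l. alpha i = 0)"
  proof
    assume H: "\<forall>i<l. alpha (tau i) = 0"
    show "\<forall>i<l. alpha i = 0"
    proof (intro allI impI)
      fix i assume "i < l"
      then have "i \<in> tau ` {0..<l}" using permutes_image[OF tau] by simp
      then obtain k where "k < l" "i = tau k" by auto
      then show "alpha i = 0" using H by simp
    qed
  next
    assume H: "\<forall>i<l. alpha i = 0"
    show "\<forall>i<l. alpha (tau i) = 0"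
      using H permutes_in_image[OF tau] by simp
  qed
  then show ?case by (simp add: Ncol_empty)
next
  case (insert c CS)
  have upd: "(alpha \<circ> tau)(i := alpha (tau i) - int (w c))
      = (alpha(tau i := alpha (tau i) - int (w c))) \<circ> tau" for i
    using permutes_inj[OF tau] by (auto simp: fun_eq_iff inj_eq)
  have "Ncol (insert c CS) w l (alpha \<circ> tau)
      = (\<Sum>i<l. Ncol CS w l ((alpha(tau i := alpha (tau i) - int (w c))) \<circ> tau))"
    using insert by (simp add: Ncol_insert upd)
  also have "\<dots> = (\<Sum>i<l. Ncol CS w l (alpha(tau i := alpha (tau i) - int (w c))))"
    by (rule sum.cong[OF refl]) (rule insert.IH)
  also have "\<dots> = (\<Sum>j<l. Ncol CS w l (alpha(j := alpha j - int (w c))))"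
    using sum.reindex_bij_betw[OF permutes_imp_bij[OF tau],
        of "\<lambda>j. Ncol CS w l (alpha(j := alpha j - int (w c)))"]
    by (simp add: atLeast0LessThan)
  also have "\<dots> = Ncol (insert c CS) w l alpha"
    using insert by (simp add: Ncol_insert)
  finally show ?case .
qed

definition DD :: "nat \<Rightarrow> (nat \<Rightarrow> int) \<Rightarrow> (nat \<Rightarrow> int) \<Rightarrow> 'c set \<Rightarrow> ('c \<Rightarrow> nat) \<Rightarrow> int" where
  "DD l a b CS w = (\<Sum>\<sigma>\<in>{\<sigma>. \<sigma> permutes {0..<l}}. sign \<sigma> * int (Ncol CS w l (\<lambda>i. a i - b (\<sigma> i))))"

lemma DD_insert:
  assumes "finite CS" "c \<notin> CS"
  shows "DD l a b (insert c CS) w = (\<Sum>i<l. DD l (a(i := a i - int (w c))) b CS w)"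
proof -
  have upd: "(\<lambda>t. a t - b (\<sigma> t))(i := a i - b (\<sigma> i) - int (w c))
      = (\<lambda>t. (a(i := a i - int (w c))) t - b (\<sigma> t))" for \<sigma> i
    by (auto simp: fun_eq_iff)
  have "DD l a b (insert c CS) w = (\<Sum>\<sigma>\<in>{\<sigma>. \<sigma> permutes {0..<l}}. \<Sum>i<l.
      sign \<sigma> * int (Ncol CS w l (\<lambda>t. (a(i := a i - int (w c))) t - b (\<sigma> t))))"
    unfolding DD_def using assms by (simp add: Ncol_insert upd sum_distrib_left)
  also have "\<dots> = (\<Sum>i<l. DD l (a(i := a i - int (w c))) b CS w)"
    unfolding DD_def by (rule sum.swap)
  finally show ?thesis .
qed

lemma DD_dup:
  assumes fin: "finite CS" and ij: "i < l" "j < l" "i \<noteq> j" "a i = a j"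
  shows "DD l a b CS w = 0"
proof -
  define tau where "tau = Transposition.transpose i j"
  have tau: "tau permutes {0..<l}" unfolding tau_def using ij by (intro permutes_swap_id) auto
  have atau: "a (tau t) = a t" for t unfolding tau_def using ij by (auto simp: Transposition.transpose_def)
  define h where "h = (\<lambda>\<sigma>. sign \<sigma> * int (Ncol CS w l (\<lambda>t. a t - b (\<sigma> t))))"
  have "DD l a b CS w = (\<Sum>\<sigma>\<in>{\<sigma>. \<sigma> permutes {0..<l}}. - h (\<sigma> \<circ> tau))"
    unfolding DD_def
  proof (rule sum.cong[OF refl])
    fix \<sigma> assume "\<sigma> \<in> {\<sigma>. \<sigma> permutes {0..<l}}"
    then have s: "\<sigma> permutes {0..<l}" by simp
    have sg: "sign (\<sigma> \<circ> tau) = - sign \<sigma>"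
      using sign_compose[OF permutes_imp_permutation[OF _ s] permutes_imp_permutation[OF _ tau]]
      by (simp add: tau_def sign_swap_id ij)
    have "Ncol CS w l (\<lambda>t. a t - b (\<sigma> t)) = Ncol CS w l ((\<lambda>t. a t - b (\<sigma> t)) \<circ> tau)"
      using Ncol_perm[OF tau fin] by simp
    also have "(\<lambda>t. a t - b (\<sigma> t)) \<circ> tau = (\<lambda>t. a t - b ((\<sigma> \<circ> tau) t))"
      by (auto simp: fun_eq_iff atau)
    finally show "sign \<sigma> * int (Ncol CS w l (\<lambda>t. a t - b (\<sigma> t))) = - h (\<sigma> \<circ> tau)"
      unfolding h_def sg by simp
  qed
  also have "\<dots> = - (\<Sum>\<sigma>\<in>{\<sigma>. \<sigma> permutes {0..<l}}. h (\<sigma> \<circ> tau))"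
    by (simp add: sum_negf)
  also have "(\<Sum>\<sigma>\<in>{\<sigma>. \<sigma> permutes {0..<l}}. h (\<sigma> \<circ> tau)) = DD l a b CS w"
    using sum_permutations_compose_right[OF tau, of h] unfolding h_def DD_def by simp
  finally show ?thesis by simp
qed

fun FF :: "int set \<Rightarrow> int set \<Rightarrow> nat \<Rightarrow> nat" where
  "FF A B 0 = (if A = B then 1 else 0)"
| "FF A B (Suc k) = (\<Sum>x\<in>{x\<in>A. x - 1 \<notin> A}. FF (insert (x - 1) (A - {x})) B k)"

inductive reach :: "int set \<Rightarrow> int set \<Rightarrow> nat \<Rightarrow> bool" where
  reach0: "reach A A 0"
| reachS: "x \<in> A \<Longrightarrow> x - 1 \<notin> A \<Longrightarrow> reach (insert (x - 1) (A - {x})) A' r \<Longrightarrow> reach A A' (Suc r)"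

lemma reach_trans: "reach A A' r \<Longrightarrow> reach A' A'' s \<Longrightarrow> reach A A'' (r + s)"
  by (induction rule: reach.induct) (auto intro: reach.intros)

lemma reach_ribbon:
  "x \<in> A \<Longrightarrow> x - int r \<notin> A \<Longrightarrow> 0 < r \<Longrightarrow> reach A (insert (x - int r) (A - {x})) r"
proof (induction r arbitrary: x A rule: less_induct)
  case (less r)
  show ?case
  proof (cases "r = 1")
    case True
    have "reach A (insert (x - 1) (A - {x})) (Suc 0)"
      by (rule reachS) (use less.prems True in \<open>auto intro: reach0\<close>)
    then show ?thesis using True by simp
  next
    case False
    then have r2: "r \<ge> 2" using less.prems by auto
    have ir: "int (r - 1) = int r - 1" using r2 by (simp add: of_nat_diff)
    show ?thesis
    proof (cases "x - 1 \<in> A")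
      case False
      let ?A1 = "insert (x - 1) (A - {x})"
      have "reach ?A1 (insert ((x - 1) - int (r - 1)) (?A1 - {x - 1})) (r - 1)"
        by (rule less.IH) (use r2 less.prems ir in auto)
      moreover have "insert ((x - 1) - int (r - 1)) (?A1 - {x - 1}) = insert (x - int r) (A - {x})"
        using False r2 ir by auto
      ultimately have "reach ?A1 (insert (x - int r) (A - {x})) (r - 1)" by simp
      then have "reach A (insert (x - int r) (A - {x})) (Suc (r - 1))"
        by (rule reachS[OF less.prems(1) False])
      then show ?thesis using r2 by simp
    next
      case True
      let ?A2 = "insert ((x - 1) - int (r - 1)) (A - {x - 1})"
      have "reach A ?A2 (r - 1)" by (rule less.IH) (use r2 less.prems True ir in auto)
      moreover have "reach ?A2 (insert (x - int r) (A - {x})) 1"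
      proof -
        have "x \<in> ?A2" "x - 1 \<notin> ?A2" using less.prems r2 ir by auto
        moreover have "insert (x - 1) (?A2 - {x}) = insert (x - int r) (A - {x})"
          using True r2 less.prems ir by auto
        ultimately show ?thesis
          using reachS[of x ?A2 "insert (x - int r) (A - {x})" 0] reach0 by auto
      qed
      ultimately have "reach A (insert (x - int r) (A - {x})) (r - 1 + 1)" by (rule reach_trans)
      then show ?thesis using r2 by simp
    qed
  qed
qed

lemma reach_FF_sum:
  "finite A \<Longrightarrow> finite T \<Longrightarrow> (\<forall>A'\<in>T. reach A A' r) \<Longrightarrow> (\<Sum>A'\<in>T. FF A' B k) \<le> FF A B (r + k)"
proof (induction r arbitrary: A T)
  case 0
  then have "T \<subseteq> {A}" by (auto elim: reach.cases)
  then show ?case by (cases "T = {}") (auto simp: subset_singleton_iff)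
next
  case (Suc r)
  let ?X = "{x\<in>A. x - 1 \<notin> A}"
  define st where "st A' = (SOME x. x \<in> A \<and> x - 1 \<notin> A \<and> reach (insert (x - 1) (A - {x})) A' r)" for A'
  have st: "st A' \<in> ?X \<and> reach (insert (st A' - 1) (A - {st A'})) A' r" if "A' \<in> T" for A'
  proof -
    have "reach A A' (Suc r)" using Suc.prems that by blast
    then have "\<exists>x. x \<in> A \<and> x - 1 \<notin> A \<and> reach (insert (x - 1) (A - {x})) A' r"
      by (cases rule: reach.cases) auto
    then show ?thesis unfolding st_def by (rule someI2_ex) auto
  qed
  have finX: "finite ?X" using Suc.prems by simp
  have "(\<Sum>A'\<in>T. FF A' B k) = (\<Sum>x\<in>?X. \<Sum>A'\<in>{A'. A' \<in> T \<and> st A' = x}. FF A' B k)"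
    by (rule sum.group[symmetric]) (use Suc.prems finX st in auto)
  also have "\<dots> \<le> (\<Sum>x\<in>?X. FF (insert (x - 1) (A - {x})) B (r + k))"
  proof (rule sum_mono)
    fix x assume "x \<in> ?X"
    show "(\<Sum>A'\<in>{A'. A' \<in> T \<and> st A' = x}. FF A' B k) \<le> FF (insert (x - 1) (A - {x})) B (r + k)"
      by (rule Suc.IH) (use Suc.prems st in auto)
  qed
  also have "\<dots> = FF A B (Suc r + k)" by simp
  finally show ?case .
qed

lemma FF_reach_pos: "finite A \<Longrightarrow> reach A A' r \<Longrightarrow> 1 \<le> FF A A' r"
  using reach_FF_sum[of A "{A'}" r A' 0] by simp

lemma FF_mono_target:
  assumes "reach B B' s" "finite B"
  shows "FF A B k \<le> FF A B' (k + s)"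
proof (induction k arbitrary: A)
  case 0
  show ?case using FF_reach_pos[OF assms(2,1)] by simp
next
  case (Suc k)
  have "FF A B (Suc k) \<le> (\<Sum>x\<in>{x\<in>A. x - 1 \<notin> A}. FF (insert (x - 1) (A - {x})) B' (k + s))"
    by (simp add: sum_mono Suc.IH)
  also have "\<dots> = FF A B' (Suc k + s)" by simp
  finally show ?case .
qed

lemma abs_sign: "\<bar>sign p\<bar> = (1::int)"
  by (simp add: sign_def)

lemma DD_empty_eq:
  "DD l a b {} w = (\<Sum>\<sigma>\<in>{\<sigma>. \<sigma> permutes {0..<l} \<and> (\<forall>i<l. a i = b (\<sigma> i))}. sign \<sigma>)"
proof -
  have fin: "finite {\<sigma>. \<sigma> permutes {0..<l}}" by (rule finite_permutations) simp
  have "DD l a b {} w = (\<Sum>\<sigma>\<in>{\<sigma>. \<sigma> permutes {0..<l}}. if (\<forall>i<l. a i = b (\<sigma> i)) then sign \<sigma> else 0)"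
    unfolding DD_def Ncol_empty by (rule sum.cong) auto
  also have "\<dots> = (\<Sum>\<sigma>\<in>{\<sigma>\<in>{\<sigma>. \<sigma> permutes {0..<l}}. (\<forall>i<l. a i = b (\<sigma> i))}. sign \<sigma>)"
    by (rule sum.inter_filter[OF fin, symmetric])
  also have "{\<sigma>\<in>{\<sigma>. \<sigma> permutes {0..<l}}. (\<forall>i<l. a i = b (\<sigma> i))}
      = {\<sigma>. \<sigma> permutes {0..<l} \<and> (\<forall>i<l. a i = b (\<sigma> i))}" by blast
  finally show ?thesis .
qed

lemma perm_match_unique:
  fixes l :: nat and s1 s2 :: "nat \<Rightarrow> nat" and b :: "nat \<Rightarrow> int"
  assumes b: "inj_on b {0..<l}" and s1: "s1 permutes {0..<l}" and s2: "s2 permutes {0..<l}"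
    and m1: "\<forall>i<l. a i = b (s1 i)" and m2: "\<forall>i<l. a i = b (s2 i)"
  shows "s1 = s2"
proof (rule ext)
  fix i
  show "s1 i = s2 i"
  proof (cases "i < l")
    case True
    have 1: "s1 i \<in> {0..<l}" using True permutes_in_image[OF s1, of i] by simp
    have 2: "s2 i \<in> {0..<l}" using True permutes_in_image[OF s2, of i] by simp
    have 3: "b (s1 i) = b (s2 i)" using m1 m2 True by metis
    show ?thesis using inj_onD[OF b 3 1 2] .
  next
    case False
    then have "i \<notin> {0..<l}" by simp
    then show ?thesis using permutes_not_in[OF s1] permutes_not_in[OF s2] by metis
  qed
qed

lemma DD_empty_bound:
  assumes b: "inj_on b {0..<l}"
  shows "\<bar>DD l a b {} w\<bar> \<le> (if a ` {0..<l} = b ` {0..<l} then 1 else 0)"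
proof -
  let ?Q = "{\<sigma>. \<sigma> permutes {0..<l} \<and> (\<forall>i<l. a i = b (\<sigma> i))}"
  have finQ: "finite ?Q" by (rule finite_subset[OF _ finite_permutations[of "{0..<l}"]]) auto
  have cQ: "card ?Q \<le> Suc 0"
    unfolding card_le_Suc0_iff_eq[OF finQ] using perm_match_unique[OF b] by blast
  have "\<bar>DD l a b {} w\<bar> \<le> (\<Sum>\<sigma>\<in>?Q. \<bar>sign \<sigma>\<bar>)"
    unfolding DD_empty_eq by (rule sum_abs)
  also have "\<dots> = int (card ?Q)" by (simp add: abs_sign)
  finally have le: "\<bar>DD l a b {} w\<bar> \<le> int (card ?Q)" .
  show ?thesis
  proof (cases "?Q = {}")
    case True
    then show ?thesis unfolding DD_empty_eq True by simp
  next
    case False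
    then obtain \<sigma> where s: "\<sigma> permutes {0..<l}" "\<forall>i<l. a i = b (\<sigma> i)" by auto
    have "a ` {0..<l} = b ` (\<sigma> ` {0..<l})" using s(2) by (auto simp: image_comp)
    also have "\<dots> = b ` {0..<l}" using permutes_image[OF s(1)] by simp
    finally show ?thesis using le cQ by simp
  qed
qed

lemma upd_image:
  fixes a :: "nat \<Rightarrow> int" and l i :: nat
  assumes "inj_on a {0..<l}" "i < l"
  shows "(a(i := v)) ` {0..<l} = insert v (a ` {0..<l} - {a i})"
proof -
  have e: "{0..<l} = insert i ({0..<l} - {i})" using assms by auto
  have "(a(i := v)) ` {0..<l} = insert v (a ` ({0..<l} - {i}))"
    by (subst e) auto
  also have "a ` ({0..<l} - {i}) = a ` {0..<l} - {a i}"
    using assms by (auto simp: inj_on_def)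
  finally show ?thesis .
qed

lemma DD_bound:
  assumes "finite CS" "\<forall>C\<in>CS. 0 < w C" "inj_on a {0..<l}" "inj_on b {0..<l}"
  shows "\<bar>DD l a b CS w\<bar> \<le> int (FF (a ` {0..<l}) (b ` {0..<l}) (\<Sum>C\<in>CS. w C))"
  using assms
proof (induction CS arbitrary: a rule: finite_induct)
  case empty
  then show ?case using DD_empty_bound[OF empty.prems(3), of a w] by (auto split: if_splits)
next
  case (insert c CS)
  define r where "r = w c"
  have r0: "0 < r" using insert.prems unfolding r_def by auto
  define A where "A = a ` {0..<l}"
  define B where "B = b ` {0..<l}"
  define W where "W = (\<Sum>C\<in>CS. w C)"
  let ?I = "{i\<in>{..<l}. a i - int r \<notin> A}"
  have each: "\<bar>DD l (a(i := a i - int r)) b CS w\<bar>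
      \<le> (if a i - int r \<notin> A then int (FF (insert (a i - int r) (A - {a i})) B W) else 0)"
    if i: "i < l" for i
  proof (cases "a i - int r \<in> A")
    case True
    then obtain j where j: "j < l" "a j = a i - int r" unfolding A_def by auto
    have "j \<noteq> i" using j r0 by auto
    then have "DD l (a(i := a i - int r)) b CS w = 0"
      by (intro DD_dup[OF insert.hyps(1) j(1) i]) (use j in auto)
    then show ?thesis using True by simp
  next
    case False
    have inj': "inj_on (a(i := a i - int r)) {0..<l}"
      by (rule inj_on_fun_updI) (use insert.prems False in \<open>auto simp: A_def\<close>)
    have img: "(a(i := a i - int r)) ` {0..<l} = insert (a i - int r) (A - {a i})"
      unfolding A_def by (rule upd_image[OF insert.prems(2) i])
    have pos: "\<forall>C\<in>CS. 0 < w C" using insert.prems(1) by simp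
    have "\<bar>DD l (a(i := a i - int r)) b CS w\<bar>
        \<le> int (FF ((a(i := a i - int r)) ` {0..<l}) (b ` {0..<l}) (\<Sum>C\<in>CS. w C))"
      by (rule insert.IH[OF pos inj' insert.prems(3)])
    then have le: "\<bar>DD l (a(i := a i - int r)) b CS w\<bar>
        \<le> int (FF (insert (a i - int r) (A - {a i})) B W)"
      unfolding img B_def W_def .
    have "(if a i - int r \<notin> A then int (FF (insert (a i - int r) (A - {a i})) B W) else 0)
        = int (FF (insert (a i - int r) (A - {a i})) B W)" using False by simp
    then show ?thesis using le by linarith
  qed
  have "\<bar>DD l a b (insert c CS) w\<bar> \<le> (\<Sum>i<l. \<bar>DD l (a(i := a i - int r)) b CS w\<bar>)"
    unfolding DD_insert[OF insert.hyps] r_def by (rule sum_abs)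
  also have "\<dots> \<le> (\<Sum>i<l. if a i - int r \<notin> A then int (FF (insert (a i - int r) (A - {a i})) B W) else 0)"
    by (rule sum_mono) (use each in auto)
  also have "\<dots> = (\<Sum>i\<in>?I. int (FF (insert (a i - int r) (A - {a i})) B W))"
    by (rule sum.inter_filter[symmetric]) simp
  also have "\<dots> = int (\<Sum>x\<in>a ` ?I. FF (insert (x - int r) (A - {x})) B W)"
  proof -
    have "inj_on a ?I" using insert.prems(2) by (rule inj_on_subset) auto
    then show ?thesis by (simp add: sum.reindex of_nat_sum)
  qed
  also have "(\<Sum>x\<in>a ` ?I. FF (insert (x - int r) (A - {x})) B W)
      = (\<Sum>A'\<in>(\<lambda>x. insert (x - int r) (A - {x})) ` (a ` ?I). FF A' B W)"
  proof -
    have "inj_on (\<lambda>x. insert (x - int r) (A - {x})) (a ` ?I)"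
    proof (rule inj_onI)
      fix x y assume x: "x \<in> a ` ?I" and y: "y \<in> a ` ?I"
        and e: "insert (x - int r) (A - {x}) = insert (y - int r) (A - {y})"
      show "x = y"
      proof (rule ccontr)
        assume "x \<noteq> y"
        have "x \<in> A" using x unfolding A_def by auto
        then have "x \<in> insert (y - int r) (A - {y})" using \<open>x \<noteq> y\<close> by auto
        then have "x \<in> insert (x - int r) (A - {x})" using e by simp
        then show False using r0 by auto
      qed
    qed
    then show ?thesis by (simp add: sum.reindex)
  qed
  also have "\<dots> \<le> FF A B (r + W)"
  proof (rule reach_FF_sum)
    show "finite A" unfolding A_def by simp
    show "finite ((\<lambda>x. insert (x - int r) (A - {x})) ` a ` ?I)" by simp
    show "\<forall>A'\<in>(\<lambda>x. insert (x - int r) (A - {x})) ` a ` ?I. reach A A' r"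
      using r0 by (auto intro!: reach_ribbon simp: A_def)
  qed
  finally show ?case using insert.hyps unfolding A_def B_def W_def r_def by simp
qed

definition sdec :: "nat \<Rightarrow> (nat \<Rightarrow> int) \<Rightarrow> bool" where
  "sdec l a \<longleftrightarrow> (\<forall>i j. i < j \<longrightarrow> j < l \<longrightarrow> a j < a i)"

lemma sdec_inj: "sdec l a \<Longrightarrow> inj_on a {0..<l}"
  unfolding sdec_def inj_on_def by (metis atLeastLessThan_iff less_irrefl linorder_neqE_nat)

lemma sdec_rank:
  assumes "sdec l a" "j < l"
  shows "{y \<in> a ` {0..<l}. a j < y} = a ` {0..<j}"
proof (rule Set.set_eqI, rule iffI)
  fix y assume "y \<in> {y \<in> a ` {0..<l}. a j < y}"
  then obtain k where k: "k < l" "y = a k" "a j < a k" by auto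
  have "k < j"
  proof (rule ccontr)
    assume "\<not> k < j"
    then have "k = j \<or> j < k" by auto
    then show False using k assms unfolding sdec_def by fastforce
  qed
  then show "y \<in> a ` {0..<j}" using k by auto
next
  fix y assume "y \<in> a ` {0..<j}"
  then obtain k where "k < j" "y = a k" by auto
  then show "y \<in> {y \<in> a ` {0..<l}. a j < y}" using assms unfolding sdec_def by auto
qed

lemma sdec_card_rank:
  assumes "sdec l a" "j < l"
  shows "card {y \<in> a ` {0..<l}. a j < y} = j"
proof -
  have "inj_on a {0..<j}" using sdec_inj[OF assms(1)] by (rule inj_on_subset) (use assms in auto)
  then show ?thesis unfolding sdec_rank[OF assms] by (simp add: card_image)
qed

lemma sdec_image_eq:
  assumes a: "sdec l a" and b: "sdec l b" and e: "a ` {0..<l} = b ` {0..<l}" and i: "i < l"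
  shows "a i = b i"
proof -
  have "b i \<in> a ` {0..<l}" using e i by auto
  then obtain j where j: "j < l" "b i = a j" by auto
  have "card {y \<in> a ` {0..<l}. a j < y} = j" by (rule sdec_card_rank[OF a j(1)])
  moreover have "card {y \<in> b ` {0..<l}. b i < y} = i" by (rule sdec_card_rank[OF b i])
  ultimately have "i = j" using e j by simp
  then show ?thesis using j by simp
qed

lemma DD_empty_sdec:
  assumes a: "sdec l a" and b: "sdec l b"
  shows "DD l a b {} w = (if a ` {0..<l} = b ` {0..<l} then 1 else 0)"
proof -
  let ?Q = "{\<sigma>. \<sigma> permutes {0..<l} \<and> (\<forall>i<l. a i = b (\<sigma> i))}"
  show ?thesis
  proof (cases "a ` {0..<l} = b ` {0..<l}")
    case True
    have idQ: "id \<in> ?Q" using sdec_image_eq[OF a b True] by (auto intro: permutes_id)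
    have "?Q = {id}"
      using idQ perm_match_unique[OF sdec_inj[OF b]] by blast
    then show ?thesis unfolding DD_empty_eq using True by simp
  next
    case False
    have "?Q = {}"
    proof (rule ccontr)
      assume "?Q \<noteq> {}"
      then obtain \<sigma> where s: "\<sigma> permutes {0..<l}" "\<forall>i<l. a i = b (\<sigma> i)" by auto
      have "a ` {0..<l} = b ` (\<sigma> ` {0..<l})" using s(2) by (auto simp: image_comp)
      also have "\<dots> = b ` {0..<l}" using permutes_image[OF s(1)] by simp
      finally show False using False by simp
    qed
    then show ?thesis unfolding DD_empty_eq using False by (simp only: sum.empty if_False)
  qed
qed

lemma DD_unit:
  assumes "finite CS" "\<forall>C\<in>CS. w C = 1" "sdec l a" "sdec l b"
  shows "DD l a b CS w = int (FF (a ` {0..<l}) (b ` {0..<l}) (card CS))"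
  using assms
proof (induction CS arbitrary: a rule: finite_induct)
  case empty
  then show ?case using DD_empty_sdec[OF empty.prems(2,3), of w] by simp
next
  case (insert c CS)
  define A where "A = a ` {0..<l}"
  define B where "B = b ` {0..<l}"
  have wc: "w c = 1" using insert.prems by simp
  have inja: "inj_on a {0..<l}" by (rule sdec_inj[OF insert.prems(2)])
  let ?I = "{i\<in>{..<l}. a i - 1 \<notin> A}"
  have each: "DD l (a(i := a i - 1)) b CS w
      = (if a i - 1 \<notin> A then int (FF (insert (a i - 1) (A - {a i})) B (card CS)) else 0)"
    if i: "i < l" for i
  proof (cases "a i - 1 \<in> A")
    case True
    then obtain j where j: "j < l" "a j = a i - 1" unfolding A_def by auto
    have "j \<noteq> i" using j by auto
    then have "DD l (a(i := a i - 1)) b CS w = 0"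
      by (intro DD_dup[OF insert.hyps(1) j(1) i]) (use j in auto)
    then show ?thesis using True by simp
  next
    case False
    have sd: "sdec l (a(i := a i - 1))"
      unfolding sdec_def
    proof (intro allI impI)
      fix p q assume pq: "p < q" "q < l"
      have apq: "a q < a p" using insert.prems(2) pq unfolding sdec_def by auto
      show "(a(i := a i - 1)) q < (a(i := a i - 1)) p"
      proof (cases "p = i")
        case True
        have "a q \<in> A" using pq unfolding A_def by auto
        then have "a q \<noteq> a i - 1" using False by auto
        then show ?thesis using True apq pq by auto
      next
        case False
        then show ?thesis using apq pq by auto
      qed
    qed
    have img: "(a(i := a i - 1)) ` {0..<l} = insert (a i - 1) (A - {a i})"
      unfolding A_def by (rule upd_image[OF inja i])
    have pos: "\<forall>C\<in>CS. w C = 1" using insert.prems(1) by simp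
    have "DD l (a(i := a i - 1)) b CS w = int (FF ((a(i := a i - 1)) ` {0..<l}) (b ` {0..<l}) (card CS))"
      by (rule insert.IH[OF pos sd insert.prems(3)])
    then have le: "DD l (a(i := a i - 1)) b CS w = int (FF (insert (a i - 1) (A - {a i})) B (card CS))"
      unfolding img B_def .
    have "(if a i - 1 \<notin> A then int (FF (insert (a i - 1) (A - {a i})) B (card CS)) else 0)
        = int (FF (insert (a i - 1) (A - {a i})) B (card CS))" using False by simp
    then show ?thesis using le by linarith
  qed
  have "DD l a b (insert c CS) w = (\<Sum>i<l. DD l (a(i := a i - 1)) b CS w)"
    using DD_insert[OF insert.hyps, of l a b w] wc by simp
  also have "\<dots> = (\<Sum>i<l. if a i - 1 \<notin> A then int (FF (insert (a i - 1) (A - {a i})) B (card CS)) else 0)"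
    by (rule sum.cong) (use each in auto)
  also have "\<dots> = (\<Sum>i\<in>?I. int (FF (insert (a i - 1) (A - {a i})) B (card CS)))"
    by (rule sum.inter_filter[symmetric]) simp
  also have "\<dots> = int (\<Sum>x\<in>a ` ?I. FF (insert (x - 1) (A - {x})) B (card CS))"
  proof -
    have "inj_on a ?I" using inja by (rule inj_on_subset) auto
    then show ?thesis by (simp add: sum.reindex of_nat_sum)
  qed
  also have "a ` ?I = {x\<in>A. x - 1 \<notin> A}" unfolding A_def by auto
  also have "int (\<Sum>x\<in>{x\<in>A. x - 1 \<notin> A}. FF (insert (x - 1) (A - {x})) B (card CS))
      = int (FF A B (Suc (card CS)))" by simp
  finally show ?case using insert.hyps unfolding A_def B_def by simp
qed

definition Mf :: "nat \<Rightarrow> 'c set \<Rightarrow> ('c \<Rightarrow> nat) \<Rightarrow> ('c \<Rightarrow> nat) \<Rightarrow> (nat \<Rightarrow> int) \<Rightarrow> (nat \<Rightarrow> int) \<Rightarrow> int mat" where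
  "Mf l CS w f a b = mat l l (\<lambda>(i,j). if int (\<Sum>C\<in>{C\<in>CS. f C = i}. w C) = a i - b j then 1 else 0)"

lemma prod_boole_int:
  assumes "finite S"
  shows "(\<Prod>i\<in>S. if Q i then (1::int) else 0) = (if \<forall>i\<in>S. Q i then 1 else 0)"
  using assms by (induction S rule: finite_induct) auto

lemma card_filter_int:
  assumes "finite A"
  shows "int (card {x\<in>A. P x}) = (\<Sum>x\<in>A. if P x then 1 else 0)"
proof -
  have "int (card {x\<in>A. P x}) = (\<Sum>x\<in>{x\<in>A. P x}. 1)" by simp
  also have "\<dots> = (\<Sum>x\<in>A. if P x then 1 else 0)" by (rule sum.inter_filter[OF assms])
  finally show ?thesis .
qed

lemma DD_det:
  assumes fin: "finite CS"
  shows "DD l a b CS w = (\<Sum>f\<in>CS \<rightarrow>\<^sub>E {0..<l}. det (Mf l CS w f a b))"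
proof -
  have finP: "finite (CS \<rightarrow>\<^sub>E {0..<l})" using fin by (intro finite_PiE) auto
  have "DD l a b CS w = (\<Sum>\<sigma>\<in>{\<sigma>. \<sigma> permutes {0..<l}}. sign \<sigma> *
      (\<Sum>f\<in>CS \<rightarrow>\<^sub>E {0..<l}. \<Prod>i=0..<l. if int (\<Sum>C\<in>{C\<in>CS. f C = i}. w C) = a i - b (\<sigma> i) then 1 else 0))"
    unfolding DD_def
  proof (rule sum.cong[OF refl])
    fix \<sigma> :: "nat \<Rightarrow> nat"
    have "int (Ncol CS w l (\<lambda>i. a i - b (\<sigma> i))) = (\<Sum>f\<in>CS \<rightarrow>\<^sub>E {0..<l}.
        if (\<forall>i<l. int (\<Sum>C\<in>{C\<in>CS. f C = i}. w C) = a i - b (\<sigma> i)) then 1 else 0)"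
      unfolding Ncol_def by (rule card_filter_int[OF finP])
    also have "\<dots> = (\<Sum>f\<in>CS \<rightarrow>\<^sub>E {0..<l}. \<Prod>i=0..<l. if int (\<Sum>C\<in>{C\<in>CS. f C = i}. w C) = a i - b (\<sigma> i) then 1 else 0)"
      by (rule sum.cong[OF refl], subst prod_boole_int) auto
    finally show "sign \<sigma> * int (Ncol CS w l (\<lambda>i. a i - b (\<sigma> i))) = sign \<sigma> *
      (\<Sum>f\<in>CS \<rightarrow>\<^sub>E {0..<l}. \<Prod>i=0..<l. if int (\<Sum>C\<in>{C\<in>CS. f C = i}. w C) = a i - b (\<sigma> i) then 1 else 0)"
      by simp
  qed
  also have "\<dots> = (\<Sum>f\<in>CS \<rightarrow>\<^sub>E {0..<l}. \<Sum>\<sigma>\<in>{\<sigma>. \<sigma> permutes {0..<l}}. sign \<sigma> *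
      (\<Prod>i=0..<l. if int (\<Sum>C\<in>{C\<in>CS. f C = i}. w C) = a i - b (\<sigma> i) then 1 else 0))"
    by (simp add: sum_distrib_left sum.swap[of _ _ "CS \<rightarrow>\<^sub>E {0..<l}"])
  also have "\<dots> = (\<Sum>f\<in>CS \<rightarrow>\<^sub>E {0..<l}. det (Mf l CS w f a b))"
  proof (rule sum.cong[OF refl])
    fix f
    show "(\<Sum>\<sigma>\<in>{\<sigma>. \<sigma> permutes {0..<l}}. sign \<sigma> *
      (\<Prod>i=0..<l. if int (\<Sum>C\<in>{C\<in>CS. f C = i}. w C) = a i - b (\<sigma> i) then 1 else 0))
      = det (Mf l CS w f a b)"
      unfolding det_def'[OF mat_carrier[of l l]] Mf_def
    proof (rule sum.cong[OF refl])
      fix \<sigma> assume "\<sigma> \<in> {\<sigma>. \<sigma> permutes {0..<l}}"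
      then have s: "\<sigma> permutes {0..<l}" by simp
      have "(\<Prod>i=0..<l. if int (\<Sum>C\<in>{C\<in>CS. f C = i}. w C) = a i - b (\<sigma> i) then (1::int) else 0)
        = (\<Prod>i=0..<l. mat l l (\<lambda>(i,j). if int (\<Sum>C\<in>{C\<in>CS. f C = i}. w C) = a i - b j then 1 else 0) $$ (i, \<sigma> i))"
      proof (rule prod.cong[OF refl])
        fix i assume "i \<in> {0..<l}"
        then have "i < l" "\<sigma> i < l" using permutes_in_image[OF s, of i] by auto
        then show "(if int (\<Sum>C\<in>{C\<in>CS. f C = i}. w C) = a i - b (\<sigma> i) then (1::int) else 0)
          = mat l l (\<lambda>(i,j). if int (\<Sum>C\<in>{C\<in>CS. f C = i}. w C) = a i - b j then 1 else 0) $$ (i, \<sigma> i)"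
          by simp
      qed
      then show "sign \<sigma> * (\<Prod>i=0..<l. if int (\<Sum>C\<in>{C\<in>CS. f C = i}. w C) = a i - b (\<sigma> i) then 1 else 0)
        = signof \<sigma> * (\<Prod>i=0..<l. mat l l (\<lambda>(i,j). if int (\<Sum>C\<in>{C\<in>CS. f C = i}. w C) = a i - b j then 1 else 0) $$ (i, \<sigma> i))"
        by simp
    qed
  qed
  finally show ?thesis .
qed

lemma mat_delete_Mf:
  "mat_delete (Mf (Suc m) CS w f a b) 0 k =
   mat m m (\<lambda>(i,j). if int (\<Sum>C\<in>{C\<in>CS. f C = Suc i}. w C) = a (Suc i) - b (insert_index k j) then 1 else 0)"
  unfolding mat_delete_def Mf_def by (rule eq_matI) (auto simp: insert_index_def)

lemma det_Mf_laplace: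
  "det (Mf (Suc m) CS w f a b) = (\<Sum>k<Suc m.
     (if int (\<Sum>C\<in>{C\<in>CS. f C = 0}. w C) = a 0 - b k then 1 else 0) * (-1)^k *
     det (mat m m (\<lambda>(i,j). if int (\<Sum>C\<in>{C\<in>CS. f C = Suc i}. w C) = a (Suc i) - b (insert_index k j) then 1 else 0)))"
proof -
  have "det (Mf (Suc m) CS w f a b) = (\<Sum>k<Suc m. Mf (Suc m) CS w f a b $$ (0,k) * cofactor (Mf (Suc m) CS w f a b) 0 k)"
    by (rule laplace_expansion_row) (auto simp: Mf_def)
  also have "\<dots> = (\<Sum>k<Suc m.
     (if int (\<Sum>C\<in>{C\<in>CS. f C = 0}. w C) = a 0 - b k then 1 else 0) * (-1)^k *
     det (mat m m (\<lambda>(i,j). if int (\<Sum>C\<in>{C\<in>CS. f C = Suc i}. w C) = a (Suc i) - b (insert_index k j) then 1 else 0)))"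
  proof (rule sum.cong[OF refl])
    fix k assume "k \<in> {..<Suc m}"
    then have "Mf (Suc m) CS w f a b $$ (0,k) = (if int (\<Sum>C\<in>{C\<in>CS. f C = 0}. w C) = a 0 - b k then 1 else 0)"
      by (simp add: Mf_def)
    then show "Mf (Suc m) CS w f a b $$ (0,k) * cofactor (Mf (Suc m) CS w f a b) 0 k =
     (if int (\<Sum>C\<in>{C\<in>CS. f C = 0}. w C) = a 0 - b k then 1 else 0) * (-1)^k *
     det (mat m m (\<lambda>(i,j). if int (\<Sum>C\<in>{C\<in>CS. f C = Suc i}. w C) = a (Suc i) - b (insert_index k j) then 1 else 0))"
      unfolding cofactor_def mat_delete_Mf by simp
  qed
  finally show ?thesis .
qed

definition merge :: "'c set \<Rightarrow> 'c set \<Rightarrow> ('c \<Rightarrow> nat) \<Rightarrow> 'c \<Rightarrow> nat" where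
  "merge CS S g = (\<lambda>C. if C \<in> CS then (if C \<in> S then Suc (g C) else 0) else undefined)"

lemma sum_PiE_split:
  assumes fin: "finite CS"
  shows "(\<Sum>f\<in>CS \<rightarrow>\<^sub>E {0..<Suc m}. Phi f) = (\<Sum>S\<in>Pow CS. \<Sum>g\<in>S \<rightarrow>\<^sub>E {0..<m}. Phi (merge CS S g))"
proof -
  let ?Sig = "Sigma (Pow CS) (\<lambda>S. S \<rightarrow>\<^sub>E {0..<m})"
  define h where "h = (\<lambda>(S, g). merge CS S g)"
  define h' where "h' = (\<lambda>f::'a \<Rightarrow> nat. ({C\<in>CS. f C \<noteq> 0}, (\<lambda>C. if C \<in> {C\<in>CS. f C \<noteq> 0} then f C - 1 else undefined)))"
  have bij: "bij_betw h ?Sig (CS \<rightarrow>\<^sub>E {0..<Suc m})"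
  proof (rule bij_betw_byWitness[where f' = h'])
    show "\<forall>p\<in>?Sig. h' (h p) = p"
    proof
      fix p assume p: "p \<in> ?Sig"
      obtain S g where pe: "p = (S, g)" by (cases p)
      have S: "S \<subseteq> CS" and g: "g \<in> S \<rightarrow>\<^sub>E {0..<m}" using p pe by auto
      have 1: "{C\<in>CS. merge CS S g C \<noteq> 0} = S" using S by (auto simp: merge_def)
      have 2: "(\<lambda>C. if C \<in> S then merge CS S g C - 1 else undefined) = g"
        using S g by (auto simp: merge_def fun_eq_iff PiE_def extensional_def)
      have hp: "h (S, g) = merge CS S g" unfolding h_def by simp
      show "h' (h p) = p" unfolding h'_def pe hp 1 2 by (rule refl)
    qed
    show "\<forall>f\<in>CS \<rightarrow>\<^sub>E {0..<Suc m}. h (h' f) = f"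
    proof
      fix f assume f: "f \<in> CS \<rightarrow>\<^sub>E {0..<Suc m}"
      show "h (h' f) = f"
        unfolding h_def h'_def merge_def using f by (auto simp: fun_eq_iff PiE_def extensional_def)
    qed
    show "h ` ?Sig \<subseteq> CS \<rightarrow>\<^sub>E {0..<Suc m}"
      unfolding h_def merge_def by (auto simp: PiE_def extensional_def Pi_def)
    show "h' ` (CS \<rightarrow>\<^sub>E {0..<Suc m}) \<subseteq> ?Sig"
    proof
      fix p assume "p \<in> h' ` (CS \<rightarrow>\<^sub>E {0..<Suc m})"
      then obtain f where f: "f \<in> CS \<rightarrow>\<^sub>E {0..<Suc m}" and pe: "p = h' f" by auto
      have "\<forall>C\<in>CS. f C < Suc m" using f by auto
      then show "p \<in> ?Sig" unfolding pe h'_def by (auto simp: PiE_def extensional_def Pi_def)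
    qed
  qed
  have "(\<Sum>f\<in>CS \<rightarrow>\<^sub>E {0..<Suc m}. Phi f) = (\<Sum>p\<in>?Sig. Phi (h p))"
    by (rule sum.reindex_bij_betw[OF bij, symmetric])
  also have "\<dots> = (\<Sum>(S,g)\<in>?Sig. Phi (merge CS S g))"
    unfolding h_def by (rule sum.cong) auto
  also have "\<dots> = (\<Sum>S\<in>Pow CS. \<Sum>g\<in>S \<rightarrow>\<^sub>E {0..<m}. Phi (merge CS S g))"
    by (rule sum.Sigma[symmetric]) (use fin in \<open>auto intro!: finite_PiE intro: finite_subset\<close>)
  finally show ?thesis .
qed

lemma merge_0: "S \<subseteq> CS \<Longrightarrow> {C\<in>CS. merge CS S g C = 0} = CS - S"
  by (auto simp: merge_def)

lemma merge_Suc: "S \<subseteq> CS \<Longrightarrow> {C\<in>CS. merge CS S g C = Suc i} = {C\<in>S. g C = i}"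
  by (auto simp: merge_def)

lemma DD_laplace:
  assumes fin: "finite CS"
  shows "DD (Suc m) a b CS w = (\<Sum>k<Suc m. (-1)^k *
     (\<Sum>S\<in>{S. S \<subseteq> CS \<and> int (\<Sum>C\<in>CS - S. w C) = a 0 - b k}.
        DD m (\<lambda>i. a (Suc i)) (\<lambda>j. b (insert_index k j)) S w))"
proof -
  have "DD (Suc m) a b CS w = (\<Sum>f\<in>CS \<rightarrow>\<^sub>E {0..<Suc m}. \<Sum>k<Suc m.
     (if int (\<Sum>C\<in>{C\<in>CS. f C = 0}. w C) = a 0 - b k then 1 else 0) * (-1)^k *
     det (mat m m (\<lambda>(i,j). if int (\<Sum>C\<in>{C\<in>CS. f C = Suc i}. w C) = a (Suc i) - b (insert_index k j) then 1 else 0)))"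
    unfolding DD_det[OF fin] det_Mf_laplace ..
  also have "\<dots> = (\<Sum>k<Suc m. \<Sum>f\<in>CS \<rightarrow>\<^sub>E {0..<Suc m}.
     (if int (\<Sum>C\<in>{C\<in>CS. f C = 0}. w C) = a 0 - b k then 1 else 0) * (-1)^k *
     det (mat m m (\<lambda>(i,j). if int (\<Sum>C\<in>{C\<in>CS. f C = Suc i}. w C) = a (Suc i) - b (insert_index k j) then 1 else 0)))"
    by (rule sum.swap)
  also have "\<dots> = (\<Sum>k<Suc m. (-1)^k *
     (\<Sum>S\<in>{S. S \<subseteq> CS \<and> int (\<Sum>C\<in>CS - S. w C) = a 0 - b k}.
        DD m (\<lambda>i. a (Suc i)) (\<lambda>j. b (insert_index k j)) S w))"
  proof (rule sum.cong[OF refl])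
    fix k
    let ?c = "\<lambda>S. int (\<Sum>C\<in>CS - S. w C) = a 0 - b k"
    have "(\<Sum>f\<in>CS \<rightarrow>\<^sub>E {0..<Suc m}.
     (if int (\<Sum>C\<in>{C\<in>CS. f C = 0}. w C) = a 0 - b k then 1 else 0) * (-1)^k *
     det (mat m m (\<lambda>(i,j). if int (\<Sum>C\<in>{C\<in>CS. f C = Suc i}. w C) = a (Suc i) - b (insert_index k j) then 1 else 0)))
      = (\<Sum>S\<in>Pow CS. \<Sum>g\<in>S \<rightarrow>\<^sub>E {0..<m}.
     (if int (\<Sum>C\<in>{C\<in>CS. merge CS S g C = 0}. w C) = a 0 - b k then 1 else 0) * (-1)^k *
     det (mat m m (\<lambda>(i,j). if int (\<Sum>C\<in>{C\<in>CS. merge CS S g C = Suc i}. w C) = a (Suc i) - b (insert_index k j) then 1 else 0)))"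
      by (rule sum_PiE_split[OF fin])
    also have "\<dots> = (\<Sum>S\<in>Pow CS. (-1)^k * (if ?c S then DD m (\<lambda>i. a (Suc i)) (\<lambda>j. b (insert_index k j)) S w else 0))"
    proof (rule sum.cong[OF refl])
      fix S assume "S \<in> Pow CS"
      then have S: "S \<subseteq> CS" by simp
      have finS: "finite S" using S fin by (rule finite_subset)
      have "(\<Sum>g\<in>S \<rightarrow>\<^sub>E {0..<m}.
     (if int (\<Sum>C\<in>{C\<in>CS. merge CS S g C = 0}. w C) = a 0 - b k then 1 else 0) * (-1)^k *
     det (mat m m (\<lambda>(i,j). if int (\<Sum>C\<in>{C\<in>CS. merge CS S g C = Suc i}. w C) = a (Suc i) - b (insert_index k j) then 1 else 0)))
       = (\<Sum>g\<in>S \<rightarrow>\<^sub>E {0..<m}. (if ?c S then 1 else 0) * (-1)^k *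
          det (Mf m S w g (\<lambda>i. a (Suc i)) (\<lambda>j. b (insert_index k j))))"
        unfolding merge_0[OF S] merge_Suc[OF S] Mf_def by simp
      also have "\<dots> = (-1)^k * (if ?c S then DD m (\<lambda>i. a (Suc i)) (\<lambda>j. b (insert_index k j)) S w else 0)"
        unfolding DD_det[OF finS] by (simp add: sum_distrib_left)
      finally show "(\<Sum>g\<in>S \<rightarrow>\<^sub>E {0..<m}.
     (if int (\<Sum>C\<in>{C\<in>CS. merge CS S g C = 0}. w C) = a 0 - b k then 1 else 0) * (-1)^k *
     det (mat m m (\<lambda>(i,j). if int (\<Sum>C\<in>{C\<in>CS. merge CS S g C = Suc i}. w C) = a (Suc i) - b (insert_index k j) then 1 else 0)))
       = (-1)^k * (if ?c S then DD m (\<lambda>i. a (Suc i)) (\<lambda>j. b (insert_index k j)) S w else 0)" .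
    qed
    also have "\<dots> = (-1)^k * (\<Sum>S\<in>Pow CS. if ?c S then DD m (\<lambda>i. a (Suc i)) (\<lambda>j. b (insert_index k j)) S w else 0)"
      by (simp add: sum_distrib_left)
    also have "(\<Sum>S\<in>Pow CS. if ?c S then DD m (\<lambda>i. a (Suc i)) (\<lambda>j. b (insert_index k j)) S w else 0)
        = (\<Sum>S\<in>{S\<in>Pow CS. ?c S}. DD m (\<lambda>i. a (Suc i)) (\<lambda>j. b (insert_index k j)) S w)"
      by (rule sum.inter_filter[symmetric]) (use fin in simp)
    also have "{S\<in>Pow CS. ?c S} = {S. S \<subseteq> CS \<and> ?c S}" by auto
    finally show "(\<Sum>f\<in>CS \<rightarrow>\<^sub>E {0..<Suc m}.
     (if int (\<Sum>C\<in>{C\<in>CS. f C = 0}. w C) = a 0 - b k then 1 else 0) * (-1)^k *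
     det (mat m m (\<lambda>(i,j). if int (\<Sum>C\<in>{C\<in>CS. f C = Suc i}. w C) = a (Suc i) - b (insert_index k j) then 1 else 0)))
      = (-1)^k * (\<Sum>S\<in>{S. S \<subseteq> CS \<and> ?c S}. DD m (\<lambda>i. a (Suc i)) (\<lambda>j. b (insert_index k j)) S w)" .
  qed
  finally show ?thesis .
qed

section \<open>Cycles of a permutation\<close>

lemma po_orbit:
  assumes "p permutes {0..<n}"
  shows "perm_orbit p x = orbit p x"
proof -
  have "permutation p" using assms by (rule permutes_imp_permutation[rotated]) simp
  then show ?thesis unfolding perm_orbit_def by (simp add: orbit_altdef_permutation)
qed

lemma po_self: "x \<in> perm_orbit p x"
  unfolding perm_orbit_def by (auto intro: exI[of _ 0])

lemma po_sub:
  assumes "p permutes {0..<n}" "x < n"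
  shows "perm_orbit p x \<subseteq> {0..<n}"
  using permutes_orbit_subset[OF assms(1), of x] assms by (simp add: po_orbit[OF assms(1)])

lemma po_finite:
  assumes "p permutes {0..<n}" "x < n"
  shows "finite (perm_orbit p x)"
  using po_sub[OF assms] by (rule finite_subset) simp

lemma po_same:
  assumes "p permutes {0..<n}" "y \<in> perm_orbit p x"
  shows "perm_orbit p y = perm_orbit p x"
proof -
  have "cyclic_on p (orbit p x)" by (rule cyclic_on_orbit[OF assms(1)]) simp
  then show ?thesis using assms orbit_cyclic_eq3 by (simp add: po_orbit[OF assms(1)])
qed

lemma cyc_len_card:
  assumes p: "p permutes {0..<n}" and x: "x < n"
  shows "cyc_len p x = card (perm_orbit p x)"
proof -
  let ?L = "cyc_len p x"
  have "x \<in> orbit p x" using po_self[where p=p and x=x] by (simp add: po_orbit[OF p])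
  then obtain k where k: "0 < k" "(p ^^ k) x = x" by (auto simp: orbit_altdef)
  have L: "0 < ?L \<and> (p ^^ ?L) x = x" unfolding cyc_len_def by (rule LeastI[of _ k]) (use k in auto)
  have Lmin: "\<not> (0 < j \<and> (p ^^ j) x = x)" if "j < ?L" for j
    using not_less_Least[OF that[unfolded cyc_len_def]] unfolding cyc_len_def by blast
  have orb: "orbit p x = (\<lambda>m. (p ^^ m) x) ` {0..<?L}"
    using orbit_altdef_bounded[where f=p and n="?L" and s=x] L by auto
  have injp: "inj (p ^^ i)" for i using permutes_inj[OF p] by simp
  have inj: "inj_on (\<lambda>m. (p ^^ m) x) {0..<?L}"
  proof (rule inj_onI)
    fix i j assume i: "i \<in> {0..<?L}" and j: "j \<in> {0..<?L}" and e: "(p ^^ i) x = (p ^^ j) x"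
    show "i = j"
    proof (rule ccontr)
      assume "i \<noteq> j"
      then consider "i < j" | "j < i" by linarith
      then show False
      proof cases
        case 1
        have "(p ^^ j) x = (p ^^ (i + (j - i))) x" using 1 by simp
        then have "(p ^^ i) ((p ^^ (j - i)) x) = (p ^^ j) x" by (simp add: funpow_add)
        then have "(p ^^ i) ((p ^^ (j - i)) x) = (p ^^ i) x" using e by simp
        then have "(p ^^ (j - i)) x = x" using injp[of i] by (auto dest: injD)
        then show False using Lmin[of "j - i"] 1 j by (auto simp: less_imp_diff_less)
      next
        case 2
        have "(p ^^ i) x = (p ^^ (j + (i - j))) x" using 2 by simp
        then have "(p ^^ j) ((p ^^ (i - j)) x) = (p ^^ i) x" by (simp add: funpow_add)
        then have "(p ^^ j) ((p ^^ (i - j)) x) = (p ^^ j) x" using e by simp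
        then have "(p ^^ (i - j)) x = x" using injp[of j] by (auto dest: injD)
        then show False using Lmin[of "i - j"] 2 i by (auto simp: less_imp_diff_less)
      qed
    qed
  qed
  show ?thesis unfolding po_orbit[OF p] orb using card_image[OF inj] by simp
qed

lemma cycles_facts:
  assumes p: "p permutes {0..<n}"
  shows "finite (perm_cycles n p)" "\<And>C. C \<in> (perm_cycles n p) \<Longrightarrow> finite C \<and> 0 < card C"
    "(\<Sum>C\<in>(perm_cycles n p). card C) = n"
    "\<And>i. 0 < i \<Longrightarrow> cycle_count n p i = card {C\<in>(perm_cycles n p). card C = i}"
proof -
  show fin: "finite (perm_cycles n p)" unfolding perm_cycles_def by simp
  show finC: "finite C \<and> 0 < card C" if C: "C \<in> (perm_cycles n p)" for C
  proof -
    obtain x where x: "x < n" "C = perm_orbit p x" using C unfolding perm_cycles_def by auto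
    have "finite C" using po_finite[OF p x(1)] x by simp
    moreover have "C \<noteq> {}" using po_self[where p=p and x=x] x by auto
    ultimately show ?thesis by (simp add: card_gt_0_iff)
  qed
  have disj: "pairwise disjnt (perm_cycles n p)"
  proof (rule pairwiseI)
    fix C D assume C: "C \<in> (perm_cycles n p)" and D: "D \<in> (perm_cycles n p)" and ne: "C \<noteq> D"
    obtain x where x: "C = perm_orbit p x" using C unfolding perm_cycles_def by auto
    obtain y where y: "D = perm_orbit p y" using D unfolding perm_cycles_def by auto
    show "disjnt C D"
    proof (rule ccontr)
      assume "\<not> disjnt C D"
      then obtain z where "z \<in> C" "z \<in> D" unfolding disjnt_def by auto
      then have "perm_orbit p z = C" "perm_orbit p z = D" using po_same[OF p, of z x] po_same[OF p, of z y] x y by auto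
      then show False using ne by simp
    qed
  qed
  have U: "\<Union>(perm_cycles n p) = {0..<n}"
  proof
    show "\<Union>(perm_cycles n p) \<subseteq> {0..<n}" unfolding perm_cycles_def using po_sub[OF p] by fastforce
    show "{0..<n} \<subseteq> \<Union>(perm_cycles n p)" unfolding perm_cycles_def using po_self by fastforce
  qed
  show "(\<Sum>C\<in>(perm_cycles n p). card C) = n"
    using card_Union_disjoint[OF disj] finC U by simp
  show "cycle_count n p i = card {C\<in>(perm_cycles n p). card C = i}" if i: "0 < i" for i
  proof -
    have e: "{x \<in> {0..<n}. cyc_len p x = i} = \<Union>{C\<in>(perm_cycles n p). card C = i}"
    proof
      show "{x \<in> {0..<n}. cyc_len p x = i} \<subseteq> \<Union>{C\<in>(perm_cycles n p). card C = i}"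
      proof
        fix x assume "x \<in> {x \<in> {0..<n}. cyc_len p x = i}"
        then have x: "x < n" "cyc_len p x = i" by auto
        have "perm_orbit p x \<in> {C\<in>(perm_cycles n p). card C = i}"
          using x cyc_len_card[OF p x(1)] unfolding perm_cycles_def by auto
        then show "x \<in> \<Union>{C\<in>(perm_cycles n p). card C = i}" using po_self[where p=p and x=x] by blast
      qed
      show "\<Union>{C\<in>(perm_cycles n p). card C = i} \<subseteq> {x \<in> {0..<n}. cyc_len p x = i}"
      proof
        fix x assume "x \<in> \<Union>{C\<in>(perm_cycles n p). card C = i}"
        then obtain C where C: "C \<in> (perm_cycles n p)" "card C = i" "x \<in> C" by auto
        obtain y where y: "y < n" "C = perm_orbit p y" using C unfolding perm_cycles_def by auto
        have xn: "x < n" using po_sub[OF p y(1)] C y by auto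
        have "perm_orbit p x = C" using po_same[OF p] C y by auto
        then show "x \<in> {x \<in> {0..<n}. cyc_len p x = i}" using cyc_len_card[OF p xn] C xn by auto
      qed
    qed
    have disj': "pairwise disjnt {C\<in>(perm_cycles n p). card C = i}" using disj by (rule pairwise_subset) auto
    have "card {x \<in> {0..<n}. cyc_len p x = i} = (\<Sum>C\<in>{C\<in>(perm_cycles n p). card C = i}. card C)"
      unfolding e by (rule card_Union_disjoint[OF disj']) (use finC in auto)
    also have "\<dots> = i * card {C\<in>(perm_cycles n p). card C = i}" by simp
    finally show ?thesis unfolding cycle_count_def using i by simp
  qed
qed

lemma sum_ge_card_remove:
  assumes "finite S" "\<forall>C\<in>S. 0 < (w C :: nat)" "C \<in> S"
  shows "w C + (card S - 1) \<le> (\<Sum>D\<in>S. w D)"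
proof -
  have "card (S - {C}) = (\<Sum>D\<in>S - {C}. (1::nat))" by simp
  also have "\<dots> \<le> (\<Sum>D\<in>S - {C}. w D)" by (rule sum_mono) (use assms in \<open>auto simp: Suc_le_eq\<close>)
  finally have "card (S - {C}) \<le> (\<Sum>D\<in>S - {C}. w D)" .
  moreover have "(\<Sum>D\<in>S. w D) = w C + (\<Sum>D\<in>S - {C}. w D)" using assms by (simp add: sum.remove)
  moreover have "card (S - {C}) = card S - 1" using assms by simp
  ultimately show ?thesis by linarith
qed

lemma count_bound:
  fixes CS :: "'c set" and w :: "'c \<Rightarrow> nat"
  assumes fin: "finite CS" and pos: "\<forall>C\<in>CS. 0 < w C"
    and P: "P \<subseteq> {(k,S). S \<subseteq> CS \<and> (\<Sum>C\<in>S. w C) + k = Delta}"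
  shows "card (P - (\<lambda>S. (0::nat, S)) ` {S. S \<subseteq> CS \<and> (\<forall>C\<in>S. w C = 1) \<and> card S = Delta})
     \<le> (\<Sum>j=1..Delta. card {C\<in>CS. w C \<le> j + 1} choose (Delta - j))"
proof -
  let ?M = "(\<lambda>S. (0::nat, S)) ` {S. S \<subseteq> CS \<and> (\<forall>C\<in>S. w C = 1) \<and> card S = Delta}"
  let ?U = "\<Union>j\<in>{1..Delta}. {S. S \<subseteq> {C\<in>CS. w C \<le> j + 1} \<and> card S = Delta - j}"
  have finP: "finite P"
    by (rule finite_subset[OF _ finite_cartesian_product[of "{..Delta}" "Pow CS"]]) (use P fin in auto)
  have inj: "inj_on snd (P - ?M)"
  proof (rule inj_onI)
    fix x y assume x: "x \<in> P - ?M" and y: "y \<in> P - ?M" and e: "snd x = snd y"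
    obtain k S where xk: "x = (k, S)" by (cases x)
    obtain k' S' where yk: "y = (k', S')" by (cases y)
    have "(\<Sum>C\<in>S. w C) + k = Delta" "(\<Sum>C\<in>S'. w C) + k' = Delta" using x y P xk yk by auto
    then show "x = y" using e xk yk by auto
  qed
  have sub: "snd ` (P - ?M) \<subseteq> ?U"
  proof
    fix S assume "S \<in> snd ` (P - ?M)"
    then obtain k where kS: "(k, S) \<in> P" "(k, S) \<notin> ?M" by auto
    have S: "S \<subseteq> CS" and W: "(\<Sum>C\<in>S. w C) + k = Delta" using kS P by auto
    have finS: "finite S" using S fin by (rule finite_subset)
    have posS: "\<forall>C\<in>S. 0 < w C" using S pos by auto
    have sW: "card S \<le> (\<Sum>C\<in>S. w C)"
    proof -
      have "card S = (\<Sum>C\<in>S. (1::nat))" by simp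
      also have "\<dots> \<le> (\<Sum>C\<in>S. w C)" by (rule sum_mono) (use posS in \<open>auto simp: Suc_le_eq\<close>)
      finally show ?thesis .
    qed
    have wC: "w C + (card S - 1) \<le> (\<Sum>D\<in>S. w D)" if "C \<in> S" for C
      by (rule sum_ge_card_remove[OF finS posS that])
    have lt: "card S < Delta"
    proof (rule ccontr)
      assume "\<not> card S < Delta"
      then have eqs: "card S = Delta" "(\<Sum>C\<in>S. w C) = Delta" "k = 0" using sW W by auto
      have "\<forall>C\<in>S. w C = 1"
      proof
        fix C assume C: "C \<in> S"
        have "w C + (card S - 1) \<le> card S" using wC[OF C] eqs by simp
        moreover have "0 < card S" using C finS by (auto simp: card_gt_0_iff)
        ultimately show "w C = 1" using posS C by fastforce
      qed
      then have "(k, S) \<in> ?M" using eqs S by auto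
      then show False using kS by simp
    qed
    define j where "j = Delta - card S"
    have j: "j \<in> {1..Delta}" using lt unfolding j_def by auto
    have "S \<subseteq> {C\<in>CS. w C \<le> j + 1}"
    proof
      fix C assume C: "C \<in> S"
      have "w C + (card S - 1) \<le> Delta" using wC[OF C] W by simp
      moreover have "0 < card S" using C finS by (auto simp: card_gt_0_iff)
      ultimately have "w C \<le> j + 1" unfolding j_def by linarith
      then show "C \<in> {C\<in>CS. w C \<le> j + 1}" using C S by auto
    qed
    moreover have "card S = Delta - j" unfolding j_def using lt by simp
    ultimately show "S \<in> ?U" using j by blast
  qed
  have "card (P - ?M) = card (snd ` (P - ?M))" by (rule card_image[OF inj, symmetric])
  also have "\<dots> \<le> card ?U" by (rule card_mono) (use fin sub in auto)
  also have "\<dots> \<le> (\<Sum>j\<in>{1..Delta}. card {S. S \<subseteq> {C\<in>CS. w C \<le> j + 1} \<and> card S = Delta - j})"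
    by (rule card_UN_le) simp
  also have "\<dots> = (\<Sum>j=1..Delta. card {C\<in>CS. w C \<le> j + 1} choose (Delta - j))"
    by (rule sum.cong[OF refl]) (rule n_subsets, use fin in simp)
  finally show ?thesis .
qed

lemma card_le_cycles:
  assumes p: "p permutes {0..<n}"
  shows "card {C\<in>perm_cycles n p. card C \<le> j + 1} = (\<Sum>i=1..j+1. cycle_count n p i)"
proof -
  have e: "{C\<in>perm_cycles n p. card C \<le> j + 1} = (\<Union>i\<in>{1..j+1}. {C\<in>perm_cycles n p. card C = i})"
    using cycles_facts(2)[OF p] by (auto simp: Suc_le_eq)
  have "card {C\<in>perm_cycles n p. card C \<le> j + 1} = (\<Sum>i\<in>{1..j+1}. card {C\<in>perm_cycles n p. card C = i})"
    unfolding e by (rule card_UN_disjoint) (use cycles_facts(1)[OF p] in auto)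
  also have "\<dots> = (\<Sum>i=1..j+1. cycle_count n p i)"
    by (rule sum.cong[OF refl]) (simp add: cycles_facts(4)[OF p])
  finally show ?thesis .
qed

lemma Bk_image:
  assumes "k \<le> m"
  shows "(\<lambda>j. - int (insert_index k j)) ` {0..<m} = {x. - int m \<le> x \<and> x \<le> 0 \<and> x \<noteq> - int k}"
proof
  show "(\<lambda>j. - int (insert_index k j)) ` {0..<m} \<subseteq> {x. - int m \<le> x \<and> x \<le> 0 \<and> x \<noteq> - int k}"
    using assms by (auto simp: insert_index_def split: if_splits)
  show "{x. - int m \<le> x \<and> x \<le> 0 \<and> x \<noteq> - int k} \<subseteq> (\<lambda>j. - int (insert_index k j)) ` {0..<m}"
  proof
    fix x assume x: "x \<in> {x. - int m \<le> x \<and> x \<le> 0 \<and> x \<noteq> - int k}"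
    define t where "t = nat (- x)"
    have t: "x = - int t" "t \<le> m" "t \<noteq> k" using x unfolding t_def by auto
    show "x \<in> (\<lambda>j. - int (insert_index k j)) ` {0..<m}"
    proof (cases "t < k")
      case True
      then show ?thesis using t assms by (auto simp: insert_index_def image_iff intro!: bexI[of _ t])
    next
      case False
      then have "k < t" using t by auto
      then show ?thesis using t assms by (auto simp: insert_index_def image_iff intro!: bexI[of _ "t - 1"])
    qed
  qed
qed

lemma Bk_reach:
  assumes "k \<le> m"
  shows "reach ((\<lambda>j. - int (insert_index k j)) ` {0..<m}) ((\<lambda>j. - int (insert_index 0 j)) ` {0..<m}) k"
proof (cases "k = 0")
  case True
  then show ?thesis by (simp add: reach0)
next
  case False
  let ?Bk = "{x. - int m \<le> x \<and> x \<le> 0 \<and> x \<noteq> - int k}"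
  have r: "reach ?Bk (insert (0 - int k) (?Bk - {0})) k"
    by (rule reach_ribbon) (use False in auto)
  have eq: "insert (0 - int k) (?Bk - {0}) = {x. - int m \<le> x \<and> x \<le> 0 \<and> x \<noteq> - int 0}"
    using assms False by auto
  have B0: "(\<lambda>j. - int (insert_index 0 j)) ` {0..<m} = {x. - int m \<le> x \<and> x \<le> 0 \<and> x \<noteq> - int 0}"
    by (rule Bk_image) simp
  from r have "reach ?Bk {x. - int m \<le> x \<and> x \<le> 0 \<and> x \<noteq> - int 0} k" unfolding eq .
  then show ?thesis unfolding Bk_image[OF assms] B0 .
qed

section \<open>Pointwise estimate\<close>

lemma funpow_id_apply: "(id ^^ k) x = x"
  by (induction k) auto

lemma perm_cycles_id: "perm_cycles D id = (\<lambda>x. {x}) ` {0..<D}"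
proof -
  have "perm_orbit id x = {x}" for x unfolding perm_orbit_def by (auto simp: funpow_id_apply)
  then show ?thesis unfolding perm_cycles_def by simp
qed

lemma pointwise:
  fixes lam :: "nat list" and p :: "nat \<Rightarrow> nat"
  assumes lam: "is_partition lam n" "lam \<noteq> []" and mu: "is_partition (tl lam) Delta"
    and p: "p permutes {0..<n}"
  shows "\<bar>chi lam p - chi (tl lam) id * int (cycle_count n p 1 choose Delta)\<bar>
     \<le> chi (tl lam) id * int (\<Sum>j=1..Delta. (\<Sum>i=1..j+1. cycle_count n p i) choose (Delta - j))"
proof -
  obtain l1 mu where lm: "lam = l1 # mu" using lam(2) by (cases lam) auto
  define m where "m = length mu"
  have tl: "tl lam = mu" using lm by simp
  have nsum: "sum_list lam = n" using lam unfolding is_partition_def by simp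
  have Dsum: "sum_list mu = Delta" using mu tl unfolding is_partition_def by simp
  have nD: "n = l1 + Delta" using nsum Dsum lm by simp
  have len: "length lam = Suc m" using lm m_def by simp
  have sortmu: "sorted_wrt (\<ge>) mu" using mu tl unfolding is_partition_def by simp
  define a where "a = (\<lambda>i. int (lam ! i) - int i)"
  define b where "b = (\<lambda>j::nat. - int j)"
  define a' where "a' = (\<lambda>i. a (Suc i))"
  define bk where "bk = (\<lambda>k j. b (insert_index k j))"
  define CS where "CS = perm_cycles n p"
  define A' where "A' = a' ` {0..<m}"
  define B0 where "B0 = bk 0 ` {0..<m}"
  define f0 where "f0 = int (FF A' B0 Delta)"
  define D where "D = (\<lambda>k S. DD m a' (bk k) S (card :: nat set \<Rightarrow> nat))"
  define SS where "SS = (\<lambda>k. {S. S \<subseteq> CS \<and> int (\<Sum>C\<in>CS - S. card C) = a 0 - b k})"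
  have finCS: "finite CS" unfolding CS_def by (rule cycles_facts(1)[OF p])
  have posCS: "\<forall>C\<in>CS. finite C \<and> 0 < card C" unfolding CS_def using cycles_facts(2)[OF p] by blast
  have sumCS: "(\<Sum>C\<in>CS. card C) = n" unfolding CS_def by (rule cycles_facts(3)[OF p])
  have chi_lam: "chi lam p = DD (Suc m) a b CS card"
    unfolding chi_def DD_def Ncol_def colorings_count_def CS_def a_def b_def nsum len by simp
  have a'_eq: "a' i = int (mu ! i) - int i - 1" for i unfolding a'_def a_def lm by simp
  have bk0: "bk 0 j = - int j - 1" for j unfolding bk_def b_def by (simp add: insert_index_def)
  have sdec_a': "sdec m a'"
    unfolding sdec_def a'_eq
  proof (intro allI impI)
    fix i j assume "i < j" "j < m"
    then have "mu ! j \<le> mu ! i" using sorted_wrt_nth_less[OF sortmu, of i j] m_def by simp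
    then show "int (mu ! j) - int j - 1 < int (mu ! i) - int i - 1" using \<open>i < j\<close> by simp
  qed
  have sdec_b0: "sdec m (bk 0)" unfolding sdec_def bk0 by simp
  have inj_bk: "inj_on (bk k) {0..<m}" for k
    unfolding bk_def b_def by (auto simp: inj_on_def insert_index_def split: if_splits)
  have f0_eq: "chi mu id = f0"
  proof -
    have "chi mu id = DD m a' (bk 0) (perm_cycles Delta id) card"
      unfolding chi_def DD_def Ncol_def colorings_count_def Dsum m_def[symmetric]
      by (simp add: a'_eq bk0 algebra_simps)
    also have "\<dots> = int (FF A' B0 (card (perm_cycles Delta id)))"
      unfolding A'_def B0_def
      by (rule DD_unit[OF _ _ sdec_a' sdec_b0]) (auto simp: perm_cycles_id)
    also have "card (perm_cycles Delta id) = Delta"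
      unfolding perm_cycles_id by (simp add: card_image)
    finally show ?thesis unfolding f0_def .
  qed
  have f0_nonneg: "0 \<le> f0" unfolding f0_def by simp
  have a0: "a 0 - b k = int l1 + int k" for k unfolding a_def b_def lm by simp
  have lap: "chi lam p = (\<Sum>k<Suc m. (-1)^k * (\<Sum>S\<in>SS k. D k S))"
    unfolding chi_lam DD_laplace[OF finCS] SS_def D_def a'_def bk_def ..
  define P where "P = Sigma {..<Suc m} SS"
  have finSS: "finite (SS k)" for k
    by (rule finite_subset[of _ "Pow CS"]) (use finCS in \<open>auto simp: SS_def\<close>)
  have finP: "finite P" unfolding P_def using finSS by auto
  have sumP: "chi lam p = (\<Sum>(k,S)\<in>P. (-1)^k * D k S)"
  proof -
    have "chi lam p = (\<Sum>k<Suc m. \<Sum>S\<in>SS k. (-1)^k * D k S)"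
      unfolding lap by (rule sum.cong[OF refl]) (rule sum_distrib_left)
    also have "\<dots> = (\<Sum>(k,S)\<in>P. (-1)^k * D k S)"
      unfolding P_def by (rule sum.Sigma) (use finSS in auto)
    finally show ?thesis .
  qed
  have Pprop: "S \<subseteq> CS \<and> (\<Sum>C\<in>S. card C) + k = Delta \<and> k \<le> m" if kS: "(k, S) \<in> P" for k S
  proof -
    have S: "S \<subseteq> CS" and c: "int (\<Sum>C\<in>CS - S. card C) = int l1 + int k" and k: "k \<le> m"
      using kS a0 unfolding P_def SS_def by auto
    have "(\<Sum>C\<in>CS. card C) = (\<Sum>C\<in>CS - S. card C) + (\<Sum>C\<in>S. card C)"
      by (rule sum.subset_diff[OF S finCS])
    moreover have "(\<Sum>C\<in>CS - S. card C) = l1 + k"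
      using c by (simp only: of_nat_add[symmetric] of_nat_eq_iff)
    ultimately show ?thesis using sumCS nD S k by simp
  qed
  have Dbound: "\<bar>D k S\<bar> \<le> f0" if kS: "(k, S) \<in> P" for k S
  proof -
    have S: "S \<subseteq> CS" and W: "(\<Sum>C\<in>S. card C) + k = Delta" and k: "k \<le> m" using Pprop[OF kS] by auto
    have finS: "finite S" using S finCS by (rule finite_subset)
    have "\<bar>D k S\<bar> \<le> int (FF A' (bk k ` {0..<m}) (\<Sum>C\<in>S. card C))"
      unfolding D_def A'_def
      by (rule DD_bound[OF finS _ sdec_inj[OF sdec_a'] inj_bk]) (use S posCS in auto)
    also have "FF A' (bk k ` {0..<m}) (\<Sum>C\<in>S. card C) \<le> FF A' B0 ((\<Sum>C\<in>S. card C) + k)"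
      unfolding B0_def
      by (rule FF_mono_target) (use Bk_reach[OF k] in \<open>simp_all add: bk_def b_def\<close>)
    finally show ?thesis unfolding f0_def W by simp
  qed
  define MS where "MS = {S. S \<subseteq> CS \<and> (\<forall>C\<in>S. card C = 1) \<and> card S = Delta}"
  define Mn where "Mn = (\<lambda>S. (0::nat, S)) ` MS"
  have MS_alt: "MS = {S. S \<subseteq> {C\<in>CS. card C = 1} \<and> card S = Delta}" unfolding MS_def by auto
  have cardMS: "card MS = cycle_count n p 1 choose Delta"
  proof -
    have "card MS = card {C\<in>CS. card C = 1} choose Delta"
      unfolding MS_alt by (rule n_subsets) (use finCS in simp)
    also have "card {C\<in>CS. card C = 1} = cycle_count n p 1"
      unfolding CS_def using cycles_facts(4)[OF p, of 1] by simp
    finally show ?thesis .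
  qed
  have Dmain: "D 0 S = f0" if "S \<in> MS" for S
  proof -
    have S: "S \<subseteq> CS" "\<forall>C\<in>S. card C = 1" "card S = Delta" using that unfolding MS_def by auto
    have finS: "finite S" using S(1) finCS by (rule finite_subset)
    have "D 0 S = int (FF A' B0 (card S))"
      unfolding D_def A'_def B0_def by (rule DD_unit[OF finS S(2) sdec_a' sdec_b0])
    then show ?thesis using S(3) unfolding f0_def by simp
  qed
  have MnP: "Mn \<subseteq> P"
  proof
    fix x assume "x \<in> Mn"
    then obtain S where x: "x = (0, S)" and S: "S \<in> MS" unfolding Mn_def by auto
    have S': "S \<subseteq> CS" "\<forall>C\<in>S. card C = 1" "card S = Delta" using S unfolding MS_def by auto
    have "(\<Sum>C\<in>S. card C) = Delta" using S' by simp
    moreover have "(\<Sum>C\<in>CS. card C) = (\<Sum>C\<in>CS - S. card C) + (\<Sum>C\<in>S. card C)"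
      by (rule sum.subset_diff[OF S'(1) finCS])
    ultimately have "int (\<Sum>C\<in>CS - S. card C) = a 0 - b 0" using sumCS nD a0[of 0] by simp
    then show "x \<in> P" unfolding x P_def SS_def using S'(1) by simp
  qed
  have "chi lam p = (\<Sum>(k,S)\<in>P - Mn. (-1)^k * D k S) + (\<Sum>(k,S)\<in>Mn. (-1)^k * D k S)"
    unfolding sumP by (rule sum.subset_diff[OF MnP finP])
  also have "(\<Sum>(k,S)\<in>Mn. (-1)^k * D k S) = (\<Sum>S\<in>MS. D 0 S)"
    unfolding Mn_def by (subst sum.reindex) (auto simp: inj_on_def)
  also have "\<dots> = int (card MS) * f0" using Dmain by simp
  finally have split: "chi lam p - chi (tl lam) id * int (cycle_count n p 1 choose Delta)
      = (\<Sum>(k,S)\<in>P - Mn. (-1)^k * D k S)"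
    using cardMS f0_eq tl by simp
  have "\<bar>\<Sum>(k,S)\<in>P - Mn. (-1)^k * D k S\<bar> \<le> (\<Sum>(k,S)\<in>P - Mn. \<bar>(-1)^k * D k S\<bar>)"
    using sum_abs[of "\<lambda>(k,S). (-1)^k * D k S" "P - Mn"] by (simp add: split_def)
  also have "\<dots> \<le> (\<Sum>(k,S)\<in>P - Mn. f0)"
    by (rule sum_mono) (use Dbound in \<open>auto simp: abs_mult\<close>)
  also have "\<dots> = int (card (P - Mn)) * f0" by simp
  also have "\<dots> \<le> int (\<Sum>j=1..Delta. card {C\<in>CS. card C \<le> j + 1} choose (Delta - j)) * f0"
  proof -
    have "card (P - Mn) \<le> (\<Sum>j=1..Delta. card {C\<in>CS. card C \<le> j + 1} choose (Delta - j))"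
    proof -
      have pos': "\<forall>C\<in>CS. 0 < card C" using posCS by blast
      have P': "P \<subseteq> {(k,S). S \<subseteq> CS \<and> (\<Sum>C\<in>S. card C) + k = Delta}"
      proof
        fix x assume "x \<in> P"
        then obtain k S where "x = (k, S)" "(k, S) \<in> P" by (cases x) auto
        then show "x \<in> {(k,S). S \<subseteq> CS \<and> (\<Sum>C\<in>S. card C) + k = Delta}" using Pprop by blast
      qed
      show ?thesis unfolding Mn_def MS_def by (rule count_bound[OF finCS pos' P'])
    qed
    then have "int (card (P - Mn)) \<le> int (\<Sum>j=1..Delta. card {C\<in>CS. card C \<le> j + 1} choose (Delta - j))"
      by (simp only: of_nat_le_iff)
    then show ?thesis using f0_nonneg by (rule mult_right_mono)
  qed
  also have "(\<Sum>j=1..Delta. card {C\<in>CS. card C \<le> j + 1} choose (Delta - j))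
      = (\<Sum>j=1..Delta. (\<Sum>i=1..j+1. cycle_count n p i) choose (Delta - j))"
    unfolding CS_def by (rule sum.cong[OF refl]) (simp only: card_le_cycles[OF p])
  finally show ?thesis unfolding split using f0_eq tl by (simp add: mult.commute)
qed

lemma permutes_funpow: "p permutes S \<Longrightarrow> (p ^^ q) permutes S"
  by (induction q) (auto intro: permutes_id permutes_compose)

lemma finite_sym_grp: "finite (sym_grp n)"
  unfolding sym_grp_def by (rule finite_permutations) simp

lemma mult_q_eq:
  assumes "is_partition lam n"
  shows "mult_q lam q = (1 / fact n) * (\<Sum>\<sigma>\<in>sym_grp n. real_of_int (chi lam (\<sigma> ^^ q)))"
proof -
  have n: "sum_list lam = n" using assms unfolding is_partition_def by simp
  have img: "(\<lambda>\<sigma>. \<sigma> ^^ q) ` sym_grp n \<subseteq> sym_grp n"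
    unfolding sym_grp_def by (auto intro: permutes_funpow)
  have "(\<Sum>\<pi>\<in>sym_grp n. real (r_q n q \<pi>) * real_of_int (chi lam \<pi>))
      = (\<Sum>\<pi>\<in>sym_grp n. \<Sum>\<sigma>\<in>{\<sigma>. \<sigma> \<in> sym_grp n \<and> \<sigma> ^^ q = \<pi>}. real_of_int (chi lam (\<sigma> ^^ q)))"
  proof (rule sum.cong[OF refl])
    fix \<pi> assume "\<pi> \<in> sym_grp n"
    have "(\<Sum>\<sigma>\<in>{\<sigma>. \<sigma> \<in> sym_grp n \<and> \<sigma> ^^ q = \<pi>}. real_of_int (chi lam (\<sigma> ^^ q)))
        = (\<Sum>\<sigma>\<in>{\<sigma>. \<sigma> \<in> sym_grp n \<and> \<sigma> ^^ q = \<pi>}. real_of_int (chi lam \<pi>))"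
      by (rule sum.cong) auto
    also have "\<dots> = real (card {\<sigma>. \<sigma> \<in> sym_grp n \<and> \<sigma> ^^ q = \<pi>}) * real_of_int (chi lam \<pi>)"
      by simp
    also have "card {\<sigma>. \<sigma> \<in> sym_grp n \<and> \<sigma> ^^ q = \<pi>} = r_q n q \<pi>"
      unfolding r_q_def by (rule refl)
    finally show "real (r_q n q \<pi>) * real_of_int (chi lam \<pi>)
        = (\<Sum>\<sigma>\<in>{\<sigma>. \<sigma> \<in> sym_grp n \<and> \<sigma> ^^ q = \<pi>}. real_of_int (chi lam (\<sigma> ^^ q)))" by (rule sym)
  qed
  also have "\<dots> = (\<Sum>\<sigma>\<in>sym_grp n. real_of_int (chi lam (\<sigma> ^^ q)))"
    by (rule sum.group[OF finite_sym_grp finite_sym_grp img])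
  finally show ?thesis unfolding mult_q_def Let_def n by simp
qed

lemma pointwise_real:
  fixes lam :: "nat list" and p :: "nat \<Rightarrow> nat"
  assumes "is_partition lam n" "lam \<noteq> []" "is_partition (tl lam) Delta" "p permutes {0..<n}"
  shows "\<bar>real_of_int (chi lam p) - real_of_int (chi (tl lam) id) * real (cycle_count n p 1 choose Delta)\<bar>
     \<le> real_of_int (chi (tl lam) id) * (\<Sum>j=1..Delta. real ((\<Sum>i=1..j+1. cycle_count n p i) choose (Delta - j)))"
proof -
  have "real_of_int \<bar>chi lam p - chi (tl lam) id * int (cycle_count n p 1 choose Delta)\<bar>
     \<le> real_of_int (chi (tl lam) id * int (\<Sum>j=1..Delta. (\<Sum>i=1..j+1. cycle_count n p i) choose (Delta - j)))"
    using pointwise[OF assms] by (simp only: of_int_le_iff)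
  then show ?thesis by (simp add: of_nat_sum)
qed

theorem proposition2p3:
  shows "\<exists>C > (0::real). \<forall>(n::nat) (lam::nat list) (mu::nat list) (Delta::nat) (q::nat).
     is_partition lam n \<and> lam \<noteq> [] \<and> mu = tl lam \<and> is_partition mu Delta \<and> 0 < q \<longrightarrow>
     \<bar>mult_q lam q
        - real_of_int (chi mu id) / fact n *
            (\<Sum>\<pi>\<in>sym_grp n. real (cycle_count n (\<pi> ^^ q) 1 choose Delta))\<bar>
     \<le> C * (real_of_int (chi mu id) / fact n) *
         (\<Sum>j = 1..Delta. \<Sum>\<pi>\<in>sym_grp n.
             real ((\<Sum>i = 1..j+1. cycle_count n (\<pi> ^^ q) i) choose (Delta - j)))"
proof (intro exI[of _ 1] conjI allI impI)
  show "(0::real) < 1" by simp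
  fix n :: nat and lam mu :: "nat list" and Delta q :: nat
  assume H: "is_partition lam n \<and> lam \<noteq> [] \<and> mu = tl lam \<and> is_partition mu Delta \<and> 0 < q"
  then have lam: "is_partition lam n" "lam \<noteq> []" and mu: "mu = tl lam" "is_partition (tl lam) Delta" by auto
  define S where "S = sym_grp n"
  define g where "g = (\<lambda>\<pi>. real_of_int (chi lam (\<pi> ^^ q)))"
  define c where "c = (\<lambda>\<pi>::nat \<Rightarrow> nat. real (cycle_count n (\<pi> ^^ q) 1 choose Delta))"
  define R where "R = (\<lambda>\<pi>::nat \<Rightarrow> nat. \<Sum>j=1..Delta. real ((\<Sum>i=1..j+1. cycle_count n (\<pi> ^^ q) i) choose (Delta - j)))"
  define f where "f = real_of_int (chi mu id)"
  define N where "N = (fact n :: real)"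
  have N: "0 < N" unfolding N_def by simp
  have pw: "\<bar>g \<pi> - f * c \<pi>\<bar> \<le> f * R \<pi>" if "\<pi> \<in> S" for \<pi>
  proof -
    have "(\<pi> ^^ q) permutes {0..<n}" using that unfolding S_def sym_grp_def by (auto intro: permutes_funpow)
    then show ?thesis unfolding g_def c_def R_def f_def mu(1) by (rule pointwise_real[OF lam mu(2)])
  qed
  have "mult_q lam q - f / N * (\<Sum>\<pi>\<in>S. c \<pi>) = (1 / N) * (\<Sum>\<pi>\<in>S. g \<pi> - f * c \<pi>)"
  proof -
    have e1: "(\<Sum>\<pi>\<in>S. g \<pi> - f * c \<pi>) = (\<Sum>\<pi>\<in>S. g \<pi>) - f * (\<Sum>\<pi>\<in>S. c \<pi>)"
      by (simp add: sum_subtractf sum_distrib_left)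
    have e2: "mult_q lam q = (1 / N) * (\<Sum>\<pi>\<in>S. g \<pi>)"
      unfolding mult_q_eq[OF lam(1)] g_def N_def S_def ..
    show ?thesis unfolding e1 e2 by (simp add: algebra_simps)
  qed
  then have "\<bar>mult_q lam q - f / N * (\<Sum>\<pi>\<in>S. c \<pi>)\<bar> = (1 / N) * \<bar>\<Sum>\<pi>\<in>S. g \<pi> - f * c \<pi>\<bar>"
    using N by (simp add: abs_mult)
  also have "\<dots> \<le> (1 / N) * (\<Sum>\<pi>\<in>S. \<bar>g \<pi> - f * c \<pi>\<bar>)"
    using N by (intro mult_left_mono sum_abs) auto
  also have "\<dots> \<le> (1 / N) * (\<Sum>\<pi>\<in>S. f * R \<pi>)"
    using N by (intro mult_left_mono sum_mono pw) auto
  also have "\<dots> = 1 * (f / N) * (\<Sum>j = 1..Delta. \<Sum>\<pi>\<in>S.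
             real ((\<Sum>i = 1..j+1. cycle_count n (\<pi> ^^ q) i) choose (Delta - j)))"
    unfolding R_def by (simp add: sum_distrib_left sum.swap[of _ S])
  finally show "\<bar>mult_q lam q
        - real_of_int (chi mu id) / fact n *
            (\<Sum>\<pi>\<in>sym_grp n. real (cycle_count n (\<pi> ^^ q) 1 choose Delta))\<bar>
     \<le> 1 * (real_of_int (chi mu id) / fact n) *
         (\<Sum>j = 1..Delta. \<Sum>\<pi>\<in>sym_grp n.
             real ((\<Sum>i = 1..j+1. cycle_count n (\<pi> ^^ q) i) choose (Delta - j)))"
    unfolding S_def c_def f_def N_def .
qed

end
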